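(* Let $(X_1,X_2)$ be an extensible pair and $k\ge1$ with $\det Z_k\neq0$. Then $P(Z_k)/Q(Z_k)$ is a cyclic group. Moreover, if $u,v$ are any two adjacent nodes of $Z_k$ both lying in $B_k:=N(A_k)\cup\{\xi_1,\xi_2\}$, then the class $[\omega_u-\omega_v]$ generates $P(Z_k)/Q(Z_k)$.
   Context: A marked Dynkin diagram $(X,\xi)$ is the Dynkin diagram of a symmetrizable generalized Cartan matrix $C(X)$ with a distinguished node $\xi$; $\det X:=\det C(X)$; $X(-1)$ is $X$ with $\xi$ and incident edges deleted ($\det$ of the empty diagram is $1$); $\Delta_X=\det X-\det X(-1)$, $\Delta_i:=\Delta_{X_i}$. $(X_1,X_2)$ is an extensible pair if $\det X_i\ne0$, $\Delta_i\ne0$, $\gcd(\det X_i,\Delta_i)=1$ ($i=1,2$) and $\gcd(\Delta_1,\Delta_2)=1$. $Z_k=Z_k(X_1,X_2)$ is obtained from the disjoint union of $X_1$, a path $A_k$ with nodes $1,\dots,k$ (consecutive nodes joined by simple edges) and $X_2$, by adding simple edges $\xi_1$—$1$ and $k$—$\xi_2$. For the Kac–Moody algebra $\mathfrak g(Z_k)$ with $\det Z_k\ne0$: $\omega_p$ are the fundamental weights ($\omega_p(\check\alpha_q)=\delta_{pq}$), $P(Z_k)=\bigoplus\mathbb Z\omega_p$ is the weight lattice and $Q(Z_k)=\bigoplus\mathbb Z\alpha_p$ the root lattice. *)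

theory Defs
  imports "Jordan_Normal_Form.Determinant"
begin

text \<open>Generalized Cartan matrices are represented as square integer matrices (JNF type int mat),
  nodes of the Dynkin diagram are the indices 0..<n.\<close>

definition gcm :: "int mat \<Rightarrow> bool" where
  "gcm A \<longleftrightarrow> dim_row A = dim_col A \<and>
     (\<forall>i < dim_row A. A $$ (i, i) = 2) \<and>
     (\<forall>i < dim_row A. \<forall>j < dim_row A. i \<noteq> j \<longrightarrow> A $$ (i, j) \<le> 0) \<and>
     (\<forall>i < dim_row A. \<forall>j < dim_row A. A $$ (i, j) = 0 \<longleftrightarrow> A $$ (j, i) = 0)"

text \<open>Symmetrizable: A = D B with D positive diagonal and B symmetric.\<close>
definition symmetrizable :: "int mat \<Rightarrow> bool" where
  "symmetrizable A \<longleftrightarrow> (\<exists>d :: nat \<Rightarrow> rat. (\<forall>i < dim_row A. d i > 0) \<and>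
     (\<forall>i < dim_row A. \<forall>j < dim_row A.
        of_int (A $$ (i, j)) / d i = of_int (A $$ (j, i)) / d j))"

definition marked_diagram :: "int mat \<Rightarrow> nat \<Rightarrow> bool" where
  "marked_diagram A \<xi> \<longleftrightarrow> gcm A \<and> symmetrizable A \<and> \<xi> < dim_row A"

text \<open>X(-1): delete the distinguished node (the determinant of the empty 0x0 matrix is 1).\<close>
definition delete_node :: "int mat \<Rightarrow> nat \<Rightarrow> int mat" where
  "delete_node A \<xi> = mat (dim_row A - 1) (dim_col A - 1)
     (\<lambda>(i, j). A $$ (if i < \<xi> then i else Suc i, if j < \<xi> then j else Suc j))"

definition Delta :: "int mat \<Rightarrow> nat \<Rightarrow> int" where
  "Delta A \<xi> = det A - det (delete_node A \<xi>)"

definition extensible_pair :: "int mat \<Rightarrow> nat \<Rightarrow> int mat \<Rightarrow> nat \<Rightarrow> bool" where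
  "extensible_pair A1 \<xi>1 A2 \<xi>2 \<longleftrightarrow>
     marked_diagram A1 \<xi>1 \<and> marked_diagram A2 \<xi>2 \<and>
     det A1 \<noteq> 0 \<and> Delta A1 \<xi>1 \<noteq> 0 \<and> gcd (det A1) (Delta A1 \<xi>1) = 1 \<and>
     det A2 \<noteq> 0 \<and> Delta A2 \<xi>2 \<noteq> 0 \<and> gcd (det A2) (Delta A2 \<xi>2) = 1 \<and>
     gcd (Delta A1 \<xi>1) (Delta A2 \<xi>2) = 1"

text \<open>With n1 = dim X_1 and n2 = dim X_2, the nodes are:
  0..<n1 the nodes of X_1; n1 + (i-1) the node i of A_k (1 \<le> i \<le> k);
  n1 + k + j the node j of X_2.\<close>
definition Zk :: "int mat \<Rightarrow> nat \<Rightarrow> int mat \<Rightarrow> nat \<Rightarrow> nat \<Rightarrow> int mat" where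
  "Zk A1 \<xi>1 A2 \<xi>2 k =
    (let n1 = dim_row A1; n2 = dim_row A2; N = n1 + k + n2 in
     mat N N (\<lambda>(i, j).
       if i < n1 \<and> j < n1 then A1 $$ (i, j)
       else if n1 + k \<le> i \<and> n1 + k \<le> j then A2 $$ (i - (n1 + k), j - (n1 + k))
       else if n1 \<le> i \<and> i < n1 + k \<and> n1 \<le> j \<and> j < n1 + k then
         (if i = j then 2 else if i = Suc j \<or> j = Suc i then -1 else 0)
       else if (i = \<xi>1 \<and> j = n1) \<or> (i = n1 \<and> j = \<xi>1) then -1
       else if (i = n1 + k - 1 \<and> j = n1 + k + \<xi>2) \<or> (i = n1 + k + \<xi>2 \<and> j = n1 + k - 1) then -1
       else 0))"

text \<open>Weight lattice P = \<oplus> Z \<omega>_p, identified with Z^N via coordinates w.r.t. the fundamental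
  weights; \<omega>_p is the p-th unit vector. Since alpha_q(coroot_p) = a_pq, we have
  \<alpha>_q = \<Sum>_p a_pq \<omega>_p, i.e. \<alpha>_q is the q-th column of the Cartan matrix.\<close>
definition weight_lattice :: "int mat \<Rightarrow> int vec set" where
  "weight_lattice A = carrier_vec (dim_row A)"

definition fund_weight :: "int mat \<Rightarrow> nat \<Rightarrow> int vec" where
  "fund_weight A p = unit_vec (dim_row A) p"

definition simple_root :: "int mat \<Rightarrow> nat \<Rightarrow> int vec" where
  "simple_root A q = col A q"

definition root_lattice :: "int mat \<Rightarrow> int vec set" where
  "root_lattice A = {A *\<^sub>v c | c. c \<in> carrier_vec (dim_col A)}"

definition generates_quotient :: "int mat \<Rightarrow> int vec \<Rightarrow> bool" where
  "generates_quotient A g \<longleftrightarrow>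
     (\<forall>x \<in> weight_lattice A. \<exists>m :: int. x - of_int m \<cdot>\<^sub>v g \<in> root_lattice A)"

definition quotient_cyclic :: "int mat \<Rightarrow> bool" where
  "quotient_cyclic A \<longleftrightarrow> (\<exists>g \<in> weight_lattice A. generates_quotient A g)"

definition adjacent :: "int mat \<Rightarrow> nat \<Rightarrow> nat \<Rightarrow> bool" where
  "adjacent A u v \<longleftrightarrow> u < dim_row A \<and> v < dim_row A \<and> u \<noteq> v \<and> A $$ (u, v) \<noteq> 0"

definition B_nodes :: "int mat \<Rightarrow> nat \<Rightarrow> int mat \<Rightarrow> nat \<Rightarrow> nat \<Rightarrow> nat set" where
  "B_nodes A1 \<xi>1 A2 \<xi>2 k = {dim_row A1 ..< dim_row A1 + k} \<union> {\<xi>1, dim_row A1 + k + \<xi>2}"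

end

theory Submission
  imports Defs
begin


definition ef :: "nat \<Rightarrow> nat \<Rightarrow> int" where
  "ef p = (\<lambda>i. if i = p then 1 else 0)"

definition inT :: "int mat \<Rightarrow> nat \<Rightarrow> (nat \<Rightarrow> int) \<Rightarrow> (nat \<Rightarrow> int) \<Rightarrow> bool" where
  "inT A N g h \<longleftrightarrow> (\<exists>c m. \<forall>i<N. h i = (\<Sum>j<N. A $$ (i, j) * c j) + m * g i)"

lemma inT_add: "inT A N g h1 \<Longrightarrow> inT A N g h2 \<Longrightarrow> inT A N g (\<lambda>i. h1 i + h2 i)"
  unfolding inT_def
proof (elim exE)
  fix c1 m1 c2 m2
  assume 1: "\<forall>i<N. h1 i = (\<Sum>j<N. A $$ (i, j) * c1 j) + m1 * g i"
     and 2: "\<forall>i<N. h2 i = (\<Sum>j<N. A $$ (i, j) * c2 j) + m2 * g i"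
  show "\<exists>c m. \<forall>i<N. h1 i + h2 i = (\<Sum>j<N. A $$ (i, j) * c j) + m * g i"
    apply (rule exI[of _ "\<lambda>j. c1 j + c2 j"], rule exI[of _ "m1 + m2"])
    using 1 2 by (simp add: distrib_left distrib_right sum.distrib)
qed

lemma inT_smult: "inT A N g h \<Longrightarrow> inT A N g (\<lambda>i. a * h i)"
  unfolding inT_def
proof (elim exE)
  fix c m
  assume 1: "\<forall>i<N. h i = (\<Sum>j<N. A $$ (i, j) * c j) + m * g i"
  show "\<exists>c m. \<forall>i<N. a * h i = (\<Sum>j<N. A $$ (i, j) * c j) + m * g i"
    apply (rule exI[of _ "\<lambda>j. a * c j"], rule exI[of _ "a * m"])
    using 1 by (simp add: distrib_left sum_distrib_left algebra_simps)
qed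

lemma inT_cong: "inT A N g h \<Longrightarrow> (\<And>i. i < N \<Longrightarrow> h i = h' i) \<Longrightarrow> inT A N g h'"
  unfolding inT_def by metis

lemma inT_zero: "inT A N g (\<lambda>i. 0)"
  unfolding inT_def by (rule exI[of _ "\<lambda>j. 0"], rule exI[of _ 0]) simp

lemma inT_diff: "inT A N g h1 \<Longrightarrow> inT A N g h2 \<Longrightarrow> inT A N g (\<lambda>i. h1 i - h2 i)"
  using inT_add[of A N g h1 "\<lambda>i. (-1) * h2 i"] inT_smult[of A N g h2 "-1"] by simp

lemma inT_sum: "finite I \<Longrightarrow> (\<And>x. x \<in> I \<Longrightarrow> inT A N g (h x)) \<Longrightarrow> inT A N g (\<lambda>i. \<Sum>x\<in>I. h x i)"
proof (induction I rule: finite_induct)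
  case empty then show ?case using inT_zero by simp
next
  case (insert x F)
  then show ?case using inT_add[of A N g "h x" "\<lambda>i. \<Sum>x\<in>F. h x i"] by simp
qed

lemma inT_col: "q < N \<Longrightarrow> inT A N g (\<lambda>i. A $$ (i, q))"
  unfolding inT_def
  by (rule exI[of _ "ef q"], rule exI[of _ 0]) (simp add: ef_def if_distrib cong: if_cong)

lemma inT_g: "inT A N g g"
  unfolding inT_def by (rule exI[of _ "\<lambda>j. 0"], rule exI[of _ 1]) simp


lemma inT_bezout: assumes "gcd a b = 1" "inT A N g (\<lambda>i. a * h i)" "inT A N g (\<lambda>i. b * h i)"
  shows "inT A N g h"
proof -
  obtain u v where uv: "u * a + v * b = gcd a b" using bezout_int by blast
  have "inT A N g (\<lambda>i. u * (a * h i) + v * (b * h i))"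
    using inT_add[OF inT_smult[OF assms(2)] inT_smult[OF assms(3)]] .
  moreover have "\<And>i. u * (a * h i) + v * (b * h i) = h i"
    using uv assms(1) by (metis distrib_right mult.assoc mult_1)
  ultimately show ?thesis by simp
qed

lemma inT_block:
  assumes B: "B \<in> carrier_mat n n"
    and rel: "\<And>q. q < n \<Longrightarrow> inT A N g (\<lambda>i. \<Sum>p<n. B $$ (p, q) * ef (f p) i)"
    and r: "r < n"
  shows "inT A N g (\<lambda>i. det B * ef (f r) i)"
proof -
  have "inT A N g (\<lambda>i. \<Sum>q<n. adj_mat B $$ (q, r) * (\<Sum>p<n. B $$ (p, q) * ef (f p) i))"
    by (rule inT_sum) (auto intro: inT_smult rel)
  moreover have "(\<Sum>q<n. adj_mat B $$ (q, r) * (\<Sum>p<n. B $$ (p, q) * ef (f p) i))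
      = det B * ef (f r) i" for i
  proof -
    have "(\<Sum>q<n. adj_mat B $$ (q, r) * (\<Sum>p<n. B $$ (p, q) * ef (f p) i))
        = (\<Sum>p<n. (\<Sum>q<n. B $$ (p, q) * adj_mat B $$ (q, r)) * ef (f p) i)"
      proof -
        have "(\<Sum>q<n. adj_mat B $$ (q, r) * (\<Sum>p<n. B $$ (p, q) * ef (f p) i))
           = (\<Sum>q<n. \<Sum>p<n. B $$ (p, q) * adj_mat B $$ (q, r) * ef (f p) i)"
          by (simp add: sum_distrib_left mult_ac)
        also have "\<dots> = (\<Sum>p<n. \<Sum>q<n. B $$ (p, q) * adj_mat B $$ (q, r) * ef (f p) i)"
          by (rule sum.swap)
        also have "\<dots> = (\<Sum>p<n. (\<Sum>q<n. B $$ (p, q) * adj_mat B $$ (q, r)) * ef (f p) i)"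
          by (simp add: sum_distrib_right)
        finally show ?thesis .
      qed
    also have "\<dots> = (\<Sum>p<n. (B * adj_mat B) $$ (p, r) * ef (f p) i)"
      using B adj_mat(1)[OF B] r by (intro sum.cong refl) (auto simp: scalar_prod_def atLeast0LessThan)
    also have "\<dots> = (\<Sum>p<n. (if p = r then det B else 0) * ef (f p) i)"
      using B r by (intro sum.cong refl) (auto simp: adj_mat(2)[OF B])
    also have "\<dots> = det B * ef (f r) i"
      using r by (simp add: if_distrib[of "\<lambda>t. t * _"] sum.delta cong: if_cong)
    finally show ?thesis .
  qed
  ultimately show ?thesis by simp
qed


lemma det_minus_corner:
  fixes A :: "int mat"
  assumes A: "A \<in> carrier_mat n n" and x: "x < n"
  shows "det (mat n n (\<lambda>(p, q). A $$ (p, q) - (if p = x \<and> q = x then 1 else 0)))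
         = det A - det (delete_node A x)"
proof -
  define B where "B = mat n n (\<lambda>(p, q). A $$ (p, q) - (if p = x \<and> q = x then 1 else 0))"
  have Bc: "B \<in> carrier_mat n n" unfolding B_def by simp
  have md: "mat_delete B i x = mat_delete A i x" for i
    using A unfolding mat_delete_def B_def by (intro eq_matI) auto
  have "det B = (\<Sum>i<n. B $$ (i, x) * cofactor B i x)" by (rule laplace_expansion_column[OF Bc x])
  also have "\<dots> = (\<Sum>i<n. (A $$ (i, x) - (if i = x then 1 else 0)) * cofactor A i x)"
  proof (intro sum.cong refl)
    fix i assume "i \<in> {..<n}"
    then have "B $$ (i, x) = A $$ (i, x) - (if i = x then 1 else 0)" using x unfolding B_def by simp
    moreover have "cofactor B i x = cofactor A i x" unfolding cofactor_def md ..
    ultimately show "B $$ (i, x) * cofactor B i x = (A $$ (i, x) - (if i = x then 1 else 0)) * cofactor A i x" by simp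
  qed
  also have "\<dots> = (\<Sum>i<n. A $$ (i, x) * cofactor A i x) - cofactor A x x"
  proof -
    have "(\<Sum>i<n. (if i = x then 1 else 0) * cofactor A i x) = cofactor A x x"
      using x by (simp add: if_distrib[of "\<lambda>t. t * _"] sum.delta cong: if_cong)
    then show ?thesis by (simp add: left_diff_distrib sum_subtractf)
  qed
  also have "\<dots> = det A - det (delete_node A x)"
    using laplace_expansion_column[OF A x] 
    by (simp add: cofactor_def delete_node_def mat_delete_def)
  finally show ?thesis unfolding B_def .
qed



definition pc :: "nat \<Rightarrow> nat \<Rightarrow> nat \<Rightarrow> nat \<Rightarrow> nat \<Rightarrow> nat" where
  "pc n1 k x1 x2 m = (if m = 0 then x1 else if m \<le> k then n1 + m - 1 else n1 + k + x2)"

lemma Zk_dim: "dim_row (Zk A1 x1 A2 x2 k) = dim_row A1 + k + dim_row A2"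
  "dim_col (Zk A1 x1 A2 x2 k) = dim_row A1 + k + dim_row A2"
  unfolding Zk_def Let_def by auto

lemma Zk_entry: "i < dim_row A1 + k + dim_row A2 \<Longrightarrow> j < dim_row A1 + k + dim_row A2 \<Longrightarrow>
  Zk A1 x1 A2 x2 k $$ (i, j) = (let n1 = dim_row A1 in
       if i < n1 \<and> j < n1 then A1 $$ (i, j)
       else if n1 + k \<le> i \<and> n1 + k \<le> j then A2 $$ (i - (n1 + k), j - (n1 + k))
       else if n1 \<le> i \<and> i < n1 + k \<and> n1 \<le> j \<and> j < n1 + k then
         (if i = j then 2 else if i = Suc j \<or> j = Suc i then -1 else 0)
       else if (i = x1 \<and> j = n1) \<or> (i = n1 \<and> j = x1) then -1
       else if (i = n1 + k - 1 \<and> j = n1 + k + x2) \<or> (i = n1 + k + x2 \<and> j = n1 + k - 1) then -1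
       else 0)"
  unfolding Zk_def Let_def by simp

lemma Zk_X1_col:
  assumes x1: "x1 < dim_row A1" and k: "1 \<le> k" and q: "q < dim_row A1"
    and i: "i < dim_row A1 + k + dim_row A2"
  shows "Zk A1 x1 A2 x2 k $$ (i, q)
    = (\<Sum>p<dim_row A1. A1 $$ (p, q) * ef p i) - (if q = x1 then ef (dim_row A1) i else 0)"
proof -
  have s: "(\<Sum>p<dim_row A1. A1 $$ (p, q) * ef p i) = (if i < dim_row A1 then A1 $$ (i, q) else 0)"
    by (simp add: ef_def if_distrib[of "\<lambda>t. _ * t"] sum.delta cong: if_cong)
  show ?thesis unfolding s using x1 k q i
    by (subst Zk_entry) (auto simp: Let_def ef_def)
qed

lemma Zk_X2_col:
  assumes x1: "x1 < dim_row A1" and x2: "x2 < dim_row A2" and k: "1 \<le> k" and q: "q < dim_row A2"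
    and i: "i < dim_row A1 + k + dim_row A2"
  shows "Zk A1 x1 A2 x2 k $$ (i, dim_row A1 + k + q)
    = (\<Sum>p<dim_row A2. A2 $$ (p, q) * ef (dim_row A1 + k + p) i)
      - (if q = x2 then ef (dim_row A1 + k - 1) i else 0)"
proof -
  have s: "(\<Sum>p<dim_row A2. A2 $$ (p, q) * ef (dim_row A1 + k + p) i)
     = (if dim_row A1 + k \<le> i then A2 $$ (i - (dim_row A1 + k), q) else 0)"
  proof (cases "dim_row A1 + k \<le> i")
    case True
    then have "(\<Sum>p<dim_row A2. A2 $$ (p, q) * ef (dim_row A1 + k + p) i)
       = (\<Sum>p<dim_row A2. if p = i - (dim_row A1 + k) then A2 $$ (p, q) else 0)"
      by (intro sum.cong refl) (auto simp: ef_def)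
    then show ?thesis using True i by (simp add: sum.delta)
  next
    case False
    then show ?thesis by (simp add: ef_def)
  qed
  show ?thesis unfolding s using x1 x2 k q i
    by (subst Zk_entry) (auto simp: Let_def ef_def)
qed


lemma Zk_path_col':
  assumes x1: "x1 < dim_row A1" and x2: "x2 < dim_row A2" and m: "m < Suc k'"
    and i: "i < dim_row A1 + Suc k' + dim_row A2"
  shows "Zk A1 x1 A2 x2 (Suc k') $$ (i, dim_row A1 + m)
    = 2 * ef (dim_row A1 + m) i - ef (if m = 0 then x1 else dim_row A1 + m - 1) i
      - ef (if m = k' then dim_row A1 + Suc k' + x2 else dim_row A1 + Suc m) i"
proof -
  define n1 where "n1 = dim_row A1"
  have e: "Zk A1 x1 A2 x2 (Suc k') $$ (i, n1 + m) = (
       if i < n1 \<and> n1 + m < n1 then A1 $$ (i, n1 + m)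
       else if n1 + Suc k' \<le> i \<and> n1 + Suc k' \<le> n1 + m then A2 $$ (i - (n1 + Suc k'), n1 + m - (n1 + Suc k'))
       else if n1 \<le> i \<and> i < n1 + Suc k' \<and> n1 \<le> n1 + m \<and> n1 + m < n1 + Suc k' then
         (if i = n1 + m then 2 else if i = Suc (n1 + m) \<or> n1 + m = Suc i then -1 else 0)
       else if (i = x1 \<and> n1 + m = n1) \<or> (i = n1 \<and> n1 + m = x1) then -1
       else if (i = n1 + Suc k' - 1 \<and> n1 + m = n1 + Suc k' + x2) \<or> (i = n1 + Suc k' + x2 \<and> n1 + m = n1 + Suc k' - 1) then -1
       else 0)"
    unfolding n1_def using Zk_entry[OF i, of "dim_row A1 + m" x1 x2] m by (simp add: Let_def)
  have x1': "x1 < n1" using x1 n1_def by simp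
  have i': "i < n1 + Suc k' + dim_row A2" using i n1_def by simp
  consider "i < n1" | "n1 \<le> i" "i < n1 + Suc k'" | "n1 + Suc k' \<le> i" by linarith
  then show ?thesis
  proof cases
    case 1
    show ?thesis unfolding n1_def[symmetric] e using x1' m i' 1
      by (simp add: ef_def) (cases m; cases k'; simp)
  next
    case 2
    then obtain t where t: "i = n1 + t" "t < Suc k'" by (metis add_less_cancel_left le_add_diff_inverse)
    have e2: "Zk A1 x1 A2 x2 (Suc k') $$ (i, n1 + m) = (if t = m then 2 else if t = Suc m \<or> m = Suc t then -1 else 0)"
      unfolding e using t m by simp
    show ?thesis unfolding n1_def[symmetric] e2 using x1' m t
      by (cases m) (auto simp: ef_def)
  next
    case 3
    then show ?thesis unfolding n1_def[symmetric] e using x1' m i'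
      by (simp add: ef_def) (cases m; simp)
  qed
qed


lemma main_units:
  fixes A1 A2 :: "int mat" and x1 x2 k' n1 n2 N :: nat and gf :: "nat \<Rightarrow> int"
  defines "Z \<equiv> Zk A1 x1 A2 x2 (Suc k')"
  defines "c \<equiv> pc n1 (Suc k') x1 x2"
  assumes ext: "extensible_pair A1 x1 A2 x2"
    and n1: "dim_row A1 = n1" and n2: "dim_row A2 = n2" and N: "N = n1 + Suc k' + n2"
    and j: "j \<le> Suc k'"
    and Dj: "inT Z N gf (\<lambda>i. ef (c (Suc j)) i - ef (c j) i)"
  shows "\<forall>p<N. inT Z N gf (ef p)"
proof -
  let ?P = "inT Z N gf"
  define D where "D m = (\<lambda>i. ef (c (Suc m)) i - ef (c m) i)" for m
  have md1: "marked_diagram A1 x1" and md2: "marked_diagram A2 x2"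
    using ext unfolding extensible_pair_def by auto
  have x1: "x1 < n1" using md1 n1 unfolding marked_diagram_def by auto
  have x2: "x2 < n2" using md2 n2 unfolding marked_diagram_def by auto
  have A1c: "A1 \<in> carrier_mat n1 n1" using md1 n1 unfolding marked_diagram_def gcm_def by auto
  have A2c: "A2 \<in> carrier_mat n2 n2" using md2 n2 unfolding marked_diagram_def gcm_def by auto
  have g1: "gcd (det A1) (Delta A1 x1) = 1" and g2: "gcd (det A2) (Delta A2 x2) = 1"
    and g12: "gcd (Delta A1 x1) (Delta A2 x2) = 1"
    using ext unfolding extensible_pair_def by auto
  have c0: "c 0 = x1" and c1: "c 1 = n1" and cK: "c (Suc k') = n1 + k'"
    and cK2: "c (Suc (Suc k')) = n1 + Suc k' + x2"
    and cS: "\<And>m. m < Suc k' \<Longrightarrow> c (Suc m) = n1 + m"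
    unfolding c_def pc_def by auto
  have cN: "\<And>m. m \<le> Suc (Suc k') \<Longrightarrow> c m < N"
    unfolding c_def pc_def N using x1 x2 by auto
  have S1: "?P (\<lambda>i. D (Suc m) i - D m i)" if m: "m < Suc k'" for m
  proof -
    have "?P (\<lambda>i. (-1) * Z $$ (i, c (Suc m)))"
      by (rule inT_smult, rule inT_col) (use cN m in auto)
    then show ?thesis
    proof (rule inT_cong)
      fix i assume i: "i < N"
      have "Z $$ (i, c (Suc m)) = 2 * ef (c (Suc m)) i - ef (c m) i - ef (c (Suc (Suc m))) i"
      proof -
        have "Z $$ (i, n1 + m) = 2 * ef (n1 + m) i - ef (if m = 0 then x1 else n1 + m - 1) i
          - ef (if m = k' then n1 + Suc k' + x2 else n1 + Suc m) i"
          unfolding Z_def using Zk_path_col'[of x1 A1 x2 A2 m k' i] x1 x2 m i n1 n2 N by simp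
        moreover have "c m = (if m = 0 then x1 else n1 + m - 1)" using m unfolding c_def pc_def by auto
        moreover have "c (Suc (Suc m)) = (if m = k' then n1 + Suc k' + x2 else n1 + Suc m)"
          using m unfolding c_def pc_def by auto
        ultimately show ?thesis using cS[OF m] by simp
      qed
      then show "(-1) * Z $$ (i, c (Suc m)) = D (Suc m) i - D m i"
        unfolding D_def by simp
    qed
  qed
  have S2: "m \<le> Suc k' \<Longrightarrow> ?P (D m) = ?P (D 0)" for m
  proof (induction m)
    case 0 then show ?case by simp
  next
    case (Suc m)
    have a: "?P (\<lambda>i. D (Suc m) i - D m i)" using S1 Suc.prems by simp
    have "?P (D (Suc m)) = ?P (D m)"
    proof
      assume "?P (D (Suc m))"
      from inT_diff[OF this a] show "?P (D m)" by simp
    next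
      assume "?P (D m)"
      from inT_add[OF this a] show "?P (D (Suc m))" by simp
    qed
    then show ?case using Suc by simp
  qed
  have D_all: "?P (D m)" if "m \<le> Suc k'" for m
    using S2[OF that] S2[OF j] Dj unfolding D_def by simp
  have S4: "m \<le> Suc (Suc k') \<Longrightarrow> ?P (\<lambda>i. ef (c m) i - ef (c 0) i)" for m
  proof (induction m)
    case 0 then show ?case using inT_zero by simp
  next
    case (Suc m)
    then have "?P (\<lambda>i. D m i + (ef (c m) i - ef (c 0) i))"
      using inT_add D_all by simp
    then show ?case unfolding D_def by simp
  qed
  have P_n1: "?P (\<lambda>i. ef n1 i - ef x1 i)" using S4[of 1] c0 c1 by simp
  have P_K: "?P (\<lambda>i. ef (n1 + k') i - ef x1 i)" using S4[of "Suc k'"] c0 cK by simp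
  have P_K2: "?P (\<lambda>i. ef (n1 + Suc k' + x2) i - ef x1 i)" using S4[of "Suc (Suc k')"] c0 cK2 by simp
  have R1: "?P (\<lambda>i. (\<Sum>p<n1. A1 $$ (p, q) * ef p i) - (if q = x1 then ef n1 i else 0))"
    if q: "q < n1" for q
  proof -
    have "?P (\<lambda>i. Z $$ (i, q))" by (rule inT_col) (use q N in auto)
    then show ?thesis
      by (rule inT_cong) (use Zk_X1_col[of x1 A1 "Suc k'" q _ A2 x2] x1 q n1 n2 N in \<open>auto simp: Z_def\<close>)
  qed
  have R2: "?P (\<lambda>i. (\<Sum>p<n2. A2 $$ (p, q) * ef (n1 + Suc k' + p) i) - (if q = x2 then ef (n1 + k') i else 0))"
    if q: "q < n2" for q
  proof -
    have "?P (\<lambda>i. Z $$ (i, n1 + Suc k' + q))" by (rule inT_col) (use q N in auto)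
    then show ?thesis
      by (rule inT_cong) (use Zk_X2_col[of x1 A1 x2 A2 "Suc k'" q _] x1 x2 q n1 n2 N in \<open>auto simp: Z_def\<close>)
  qed
  define B1 where "B1 = mat n1 n1 (\<lambda>(p, q). A1 $$ (p, q) - (if p = x1 \<and> q = x1 then 1 else 0))"
  define B2 where "B2 = mat n2 n2 (\<lambda>(p, q). A2 $$ (p, q) - (if p = x2 \<and> q = x2 then 1 else 0))"
  have dB1: "det B1 = Delta A1 x1"
    unfolding B1_def Delta_def using det_minus_corner[OF A1c x1] .
  have dB2: "det B2 = Delta A2 x2"
    unfolding B2_def Delta_def using det_minus_corner[OF A2c x2] .
  have sum_corner: "(\<Sum>p<n. (A $$ (p, q) - (if p = x \<and> q = x then 1 else 0)) * ef (f p) i)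
     = (\<Sum>p<n. A $$ (p, q) * ef (f p) i) - (if q = x then ef (f x) i else 0)"
    if "x < n" for n A q x and f :: "nat \<Rightarrow> nat" and i
  proof -
    have "(\<Sum>p<n. (if p = x \<and> q = x then 1 else 0) * ef (f p) i) = (if q = x then ef (f x) i else 0)"
      using that by (cases "q = x") (simp_all add: if_distrib[of "\<lambda>t. t * _"] sum.delta cong: if_cong)
    then show ?thesis by (simp add: left_diff_distrib sum_subtractf)
  qed
  have Q1: "?P (\<lambda>i. Delta A1 x1 * ef r i)" if r: "r < n1" for r
  proof -
    have "?P (\<lambda>i. det B1 * ef (id r) i)"
    proof (rule inT_block[OF _ _ r])
      show "B1 \<in> carrier_mat n1 n1" unfolding B1_def by simp
      fix q assume q: "q < n1"
      have "?P (\<lambda>i. ((\<Sum>p<n1. A1 $$ (p, q) * ef p i) - (if q = x1 then ef n1 i else 0))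
         + (if q = x1 then ef n1 i - ef x1 i else 0))"
        by (rule inT_add[OF R1[OF q]]) (cases "q = x1", use P_n1 inT_zero in auto)
      then show "?P (\<lambda>i. \<Sum>p<n1. B1 $$ (p, q) * ef (id p) i)"
      proof (rule inT_cong)
        fix i
        have "(\<Sum>p<n1. B1 $$ (p, q) * ef (id p) i)
           = (\<Sum>p<n1. (A1 $$ (p, q) - (if p = x1 \<and> q = x1 then 1 else 0)) * ef (id p) i)"
          using q by (intro sum.cong refl) (simp add: B1_def)
        also have "\<dots> = (\<Sum>p<n1. A1 $$ (p, q) * ef (id p) i) - (if q = x1 then ef (id x1) i else 0)"
          by (rule sum_corner[OF x1])
        finally show "((\<Sum>p<n1. A1 $$ (p, q) * ef p i) - (if q = x1 then ef n1 i else 0))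
         + (if q = x1 then ef n1 i - ef x1 i else 0) = (\<Sum>p<n1. B1 $$ (p, q) * ef (id p) i)"
          by simp
      qed
    qed
    then show ?thesis using dB1 by simp
  qed
  define off where "off = n1 + Suc k'"
  have Q2: "?P (\<lambda>i. Delta A2 x2 * ef (off + r) i)" if r: "r < n2" for r
  proof -
    have "?P (\<lambda>i. det B2 * ef ((\<lambda>p. off + p) r) i)"
    proof (rule inT_block[OF _ _ r])
      show "B2 \<in> carrier_mat n2 n2" unfolding B2_def by simp
      fix q assume q: "q < n2"
      have P_K': "?P (\<lambda>i. ef (n1 + k') i - ef (off + x2) i)"
        using inT_diff[OF P_K P_K2] unfolding off_def by simp
      have "?P (\<lambda>i. ((\<Sum>p<n2. A2 $$ (p, q) * ef (off + p) i) - (if q = x2 then ef (n1 + k') i else 0))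
         + (if q = x2 then ef (n1 + k') i - ef (off + x2) i else 0))"
        by (rule inT_add[OF R2[OF q, folded off_def]]) (cases "q = x2", use P_K' inT_zero in auto)
      then show "?P (\<lambda>i. \<Sum>p<n2. B2 $$ (p, q) * ef ((\<lambda>p. off + p) p) i)"
      proof (rule inT_cong)
        fix i
        have "(\<Sum>p<n2. B2 $$ (p, q) * ef ((\<lambda>p. off + p) p) i)
           = (\<Sum>p<n2. (A2 $$ (p, q) - (if p = x2 \<and> q = x2 then 1 else 0)) * ef ((\<lambda>p. off + p) p) i)"
          using q by (intro sum.cong refl) (simp add: B2_def)
        also have "\<dots> = (\<Sum>p<n2. A2 $$ (p, q) * ef ((\<lambda>p. off + p) p) i) - (if q = x2 then ef ((\<lambda>p. off + p) x2) i else 0)"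
          by (rule sum_corner[OF x2])
        finally show "((\<Sum>p<n2. A2 $$ (p, q) * ef (off + p) i) - (if q = x2 then ef (n1 + k') i else 0))
         + (if q = x2 then ef (n1 + k') i - ef (off + x2) i else 0) = (\<Sum>p<n2. B2 $$ (p, q) * ef ((\<lambda>p. off + p) p) i)"
          by simp
      qed
    qed
    then show ?thesis using dB2 by simp
  qed
  have P_x1: "?P (ef x1)"
  proof (rule inT_bezout[OF g12])
    show "?P (\<lambda>i. Delta A1 x1 * ef x1 i)" using Q1[OF x1] .
    have "?P (\<lambda>i. Delta A2 x2 * ef (off + x2) i - Delta A2 x2 * (ef (n1 + Suc k' + x2) i - ef x1 i))"
      by (rule inT_diff[OF Q2[OF x2] inT_smult[OF P_K2]])
    then show "?P (\<lambda>i. Delta A2 x2 * ef x1 i)"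
      by (rule inT_cong) (simp add: off_def algebra_simps)
  qed
  have P_n1': "?P (ef n1)" using inT_add[OF P_n1 P_x1] by simp
  have P_K': "?P (ef (n1 + k'))" using inT_add[OF P_K P_x1] by simp
  have P_X1: "?P (ef r)" if r: "r < n1" for r
  proof (rule inT_bezout[OF g1])
    show "?P (\<lambda>i. Delta A1 x1 * ef r i)" using Q1[OF r] .
    have "?P (\<lambda>i. det A1 * ef (id r) i)"
    proof (rule inT_block[OF A1c _ r])
      fix q assume q: "q < n1"
      have "?P (\<lambda>i. ((\<Sum>p<n1. A1 $$ (p, q) * ef p i) - (if q = x1 then ef n1 i else 0))
         + (if q = x1 then ef n1 i else 0))"
        by (rule inT_add[OF R1[OF q]]) (cases "q = x1", use P_n1' inT_zero in auto)
      then show "?P (\<lambda>i. \<Sum>p<n1. A1 $$ (p, q) * ef (id p) i)" by simp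
    qed
    then show "?P (\<lambda>i. det A1 * ef r i)" by simp
  qed
  have P_X2: "?P (ef (off + r))" if r: "r < n2" for r
  proof (rule inT_bezout[OF g2])
    show "?P (\<lambda>i. Delta A2 x2 * ef (off + r) i)" using Q2[OF r] .
    have "?P (\<lambda>i. det A2 * ef ((\<lambda>p. off + p) r) i)"
    proof (rule inT_block[OF A2c _ r])
      fix q assume q: "q < n2"
      have "?P (\<lambda>i. ((\<Sum>p<n2. A2 $$ (p, q) * ef (off + p) i) - (if q = x2 then ef (n1 + k') i else 0))
         + (if q = x2 then ef (n1 + k') i else 0))"
        by (rule inT_add[OF R2[OF q, folded off_def]]) (cases "q = x2", use P_K' inT_zero in auto)
      then show "?P (\<lambda>i. \<Sum>p<n2. A2 $$ (p, q) * ef ((\<lambda>p. off + p) p) i)" by simp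
    qed
    then show "?P (\<lambda>i. det A2 * ef (off + r) i)" by simp
  qed
  have P_path: "?P (ef (n1 + m))" if m: "m < Suc k'" for m
    using inT_add[OF S4[of "Suc m"] P_x1] m cS[OF m] c0 by simp
  show ?thesis
  proof (intro allI impI)
    fix p assume p: "p < N"
    consider "p < n1" | "n1 \<le> p" "p < off" | "off \<le> p" unfolding off_def by linarith
    then show "?P (ef p)"
    proof cases
      case 1 then show ?thesis by (rule P_X1)
    next
      case 2
      then have "p = n1 + (p - n1)" "p - n1 < Suc k'" unfolding off_def by auto
      then show ?thesis using P_path by metis
    next
      case 3
      then have "p = off + (p - off)" "p - off < n2" using p unfolding off_def N by auto
      then show ?thesis using P_X2 by metis
    qed
  qed
qed


lemma adj_path:
  fixes A1 A2 :: "int mat" and x1 x2 k' :: nat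
  defines "c \<equiv> pc (dim_row A1) (Suc k') x1 x2"
  assumes x1: "x1 < dim_row A1" and x2: "x2 < dim_row A2"
    and u: "u \<in> B_nodes A1 x1 A2 x2 (Suc k')" and v: "v \<in> B_nodes A1 x1 A2 x2 (Suc k')"
    and adj: "adjacent (Zk A1 x1 A2 x2 (Suc k')) u v"
  shows "\<exists>j \<le> Suc k'. (u = c j \<and> v = c (Suc j)) \<or> (u = c (Suc j) \<and> v = c j)"
proof -
  define n1 where "n1 = dim_row A1"
  have uN: "u < dim_row A1 + Suc k' + dim_row A2" and vN: "v < dim_row A1 + Suc k' + dim_row A2"
    and uv: "u \<noteq> v" and nz: "Zk A1 x1 A2 x2 (Suc k') $$ (u, v) \<noteq> 0"
    using adj unfolding adjacent_def Zk_dim by auto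
  have ub: "u \<in> {n1..<n1 + Suc k'} \<or> u = x1 \<or> u = n1 + Suc k' + x2"
    using u unfolding B_nodes_def n1_def by auto
  have vb: "v \<in> {n1..<n1 + Suc k'} \<or> v = x1 \<or> v = n1 + Suc k' + x2"
    using v unfolding B_nodes_def n1_def by auto
  have cS: "\<And>m. m < Suc k' \<Longrightarrow> c (Suc m) = n1 + m" and c0: "c 0 = x1"
    and cK2: "c (Suc (Suc k')) = n1 + Suc k' + x2"
    unfolding c_def pc_def n1_def by auto
  consider (a) m where "v = n1 + m" "m < Suc k'" | (b) "v = x1" | (c) "v = n1 + Suc k' + x2"
    using vb by (metis atLeastLessThan_iff le_add_diff_inverse nat_add_left_cancel_less)
  then show ?thesis
  proof cases
    case a
    have e: "Zk A1 x1 A2 x2 (Suc k') $$ (u, v) = 2 * ef (n1 + m) u - ef (if m = 0 then x1 else n1 + m - 1) u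
      - ef (if m = k' then n1 + Suc k' + x2 else n1 + Suc m) u"
      using Zk_path_col'[OF x1 x2 a(2) uN] a(1) unfolding n1_def by simp
    have cm: "c m = (if m = 0 then x1 else n1 + m - 1)" using a unfolding c_def pc_def n1_def by auto
    have cm2: "c (Suc (Suc m)) = (if m = k' then n1 + Suc k' + x2 else n1 + Suc m)"
      using a unfolding c_def pc_def n1_def by auto
    have "u = c m \<or> u = c (Suc (Suc m))"
    proof -
      have e': "Zk A1 x1 A2 x2 (Suc k') $$ (u, v) = 2 * ef (n1 + m) u - ef (c m) u - ef (c (Suc (Suc m))) u"
        using e cm cm2 by simp
      have "ef (n1 + m) u = 0" using uv a(1) by (simp add: ef_def)
      then show ?thesis using nz e' by (auto simp: ef_def split: if_splits)
    qed
    then show ?thesis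
    proof
      assume "u = c m" then show ?thesis using a cS[OF a(2)] by (intro exI[of _ m]) auto
    next
      assume "u = c (Suc (Suc m))" then show ?thesis using a cS[OF a(2)] by (intro exI[of _ "Suc m"]) auto
    qed
  next
    case b
    have e: "Zk A1 x1 A2 x2 (Suc k') $$ (u, v) = (\<Sum>p<n1. A1 $$ (p, x1) * ef p u) - ef n1 u"
      using Zk_X1_col[OF x1 _ x1 uN] b unfolding n1_def by simp
    have "u \<ge> n1" using ub uv b x1 unfolding n1_def by auto
    then have "(\<Sum>p<n1. A1 $$ (p, x1) * ef p u) = 0" by (intro sum.neutral) (auto simp: ef_def)
    then have "u = n1" using nz e by (auto simp: ef_def split: if_splits)
    then show ?thesis using b cS[of 0] c0 by (intro exI[of _ 0]) auto
  next
    case c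
    have e: "Zk A1 x1 A2 x2 (Suc k') $$ (u, v) = (\<Sum>p<dim_row A2. A2 $$ (p, x2) * ef (n1 + Suc k' + p) u) - ef (n1 + k') u"
      using Zk_X2_col[OF x1 x2 _ x2 uN] c unfolding n1_def by simp
    have "u < n1 + Suc k'" using ub uv c x1 unfolding n1_def by auto
    then have "(\<Sum>p<dim_row A2. A2 $$ (p, x2) * ef (n1 + Suc k' + p) u) = 0" by (intro sum.neutral) (auto simp: ef_def)
    then have "u = n1 + k'" using nz e by (auto simp: ef_def split: if_splits)
    then show ?thesis using c cS[of k'] cK2 by (intro exI[of _ "Suc k'"]) auto
  qed
qed



theorem lemma3p11:
  fixes A1 A2 :: "int mat" and \<xi>1 \<xi>2 k :: nat
  assumes "extensible_pair A1 \<xi>1 A2 \<xi>2"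
    and "k \<ge> 1"
    and "det (Zk A1 \<xi>1 A2 \<xi>2 k) \<noteq> 0"
  shows "quotient_cyclic (Zk A1 \<xi>1 A2 \<xi>2 k) \<and>
    (\<forall>u v. u \<in> B_nodes A1 \<xi>1 A2 \<xi>2 k \<and> v \<in> B_nodes A1 \<xi>1 A2 \<xi>2 k \<and>
           adjacent (Zk A1 \<xi>1 A2 \<xi>2 k) u v \<longrightarrow>
       generates_quotient (Zk A1 \<xi>1 A2 \<xi>2 k)
         (fund_weight (Zk A1 \<xi>1 A2 \<xi>2 k) u - fund_weight (Zk A1 \<xi>1 A2 \<xi>2 k) v))"
proof -
  note ext = assms(1)
  obtain k' where k: "k = Suc k'" using assms(2) by (cases k) auto
  define Z where "Z = Zk A1 \<xi>1 A2 \<xi>2 k"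
  define N where "N = dim_row A1 + Suc k' + dim_row A2"
  define c where "c = pc (dim_row A1) (Suc k') \<xi>1 \<xi>2"
  have x1: "\<xi>1 < dim_row A1" and x2: "\<xi>2 < dim_row A2"
    using ext unfolding extensible_pair_def marked_diagram_def by auto
  have dimZ: "dim_row Z = N" "dim_col Z = N" unfolding Z_def N_def k Zk_dim by auto
  have gen: "generates_quotient Z (fund_weight Z u - fund_weight Z v)"
    if u: "u \<in> B_nodes A1 \<xi>1 A2 \<xi>2 k" and v: "v \<in> B_nodes A1 \<xi>1 A2 \<xi>2 k"
      and adj: "adjacent Z u v" for u v
  proof -
    obtain j where j: "j \<le> Suc k'" and uv: "(u = c j \<and> v = c (Suc j)) \<or> (u = c (Suc j) \<and> v = c j)"
      using adj_path[OF x1 x2 u[unfolded k] v[unfolded k] adj[unfolded Z_def k]] unfolding c_def by blast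
    have uN: "u < N" and vN: "v < N" using adj dimZ unfolding adjacent_def by auto
    define g where "g = fund_weight Z u - fund_weight Z v"
    define gf where "gf = (\<lambda>i. g $ i)"
    have gf_i: "gf i = ef u i - ef v i" if "i < N" for i
      using that uN vN unfolding gf_def g_def fund_weight_def dimZ by (simp add: ef_def)
    have Dj: "inT Z N gf (\<lambda>i. ef (c (Suc j)) i - ef (c j) i)"
      using uv
    proof
      assume h: "u = c j \<and> v = c (Suc j)"
      have "inT Z N gf (\<lambda>i. (-1) * gf i)" by (rule inT_smult, rule inT_g)
      then show ?thesis by (rule inT_cong) (use gf_i h in simp)
    next
      assume h: "u = c (Suc j) \<and> v = c j"
      show ?thesis using inT_g by (rule inT_cong) (use gf_i h in simp)
    qed
    have all: "\<forall>p<N. inT Z N gf (ef p)"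
      using main_units[OF ext refl refl N_def j] Dj unfolding Z_def k c_def by blast
    show ?thesis unfolding generates_quotient_def g_def[symmetric]
    proof
      fix x assume x: "x \<in> weight_lattice Z"
      then have xc: "x \<in> carrier_vec N" unfolding weight_lattice_def dimZ .
      have "inT Z N gf (\<lambda>i. \<Sum>p<N. x $ p * ef p i)"
        by (rule inT_sum) (use all in \<open>auto intro: inT_smult\<close>)
      then have "inT Z N gf (\<lambda>i. x $ i)"
        by (rule inT_cong) (simp add: ef_def if_distrib[of "\<lambda>t. _ * t"] sum.delta cong: if_cong)
      then obtain cc m where cc: "\<forall>i<N. x $ i = (\<Sum>j<N. Z $$ (i, j) * cc j) + m * gf i"
        unfolding inT_def by blast
      have gd: "dim_vec g = N" unfolding g_def fund_weight_def dimZ by simp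
      have "x - of_int m \<cdot>\<^sub>v g = Z *\<^sub>v vec N cc"
      proof (rule eq_vecI)
        show "dim_vec (x - of_int m \<cdot>\<^sub>v g) = dim_vec (Z *\<^sub>v vec N cc)"
          using xc dimZ gd by simp
        fix i assume "i < dim_vec (Z *\<^sub>v vec N cc)"
        then have i: "i < N" using dimZ by simp
        have "(Z *\<^sub>v vec N cc) $ i = (\<Sum>j<N. Z $$ (i, j) * cc j)"
          using i dimZ by (simp add: scalar_prod_def atLeast0LessThan)
        then show "(x - of_int m \<cdot>\<^sub>v g) $ i = (Z *\<^sub>v vec N cc) $ i"
          using cc i xc gd unfolding gf_def by simp
      qed
      moreover have "vec N cc \<in> carrier_vec (dim_col Z)" using dimZ by simp
      ultimately show "\<exists>m. x - of_int m \<cdot>\<^sub>v g \<in> root_lattice Z"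
        unfolding root_lattice_def by blast
    qed
  qed
  have ub: "\<xi>1 \<in> B_nodes A1 \<xi>1 A2 \<xi>2 k" and vb: "dim_row A1 \<in> B_nodes A1 \<xi>1 A2 \<xi>2 k"
    unfolding B_nodes_def k by auto
  have adj0: "adjacent Z \<xi>1 (dim_row A1)"
  proof -
    have "Z $$ (\<xi>1, dim_row A1) = -1"
      unfolding Z_def k using x1 by (subst Zk_entry) (auto simp: Let_def)
    then show ?thesis unfolding adjacent_def dimZ N_def using x1 by auto
  qed
  have "quotient_cyclic Z"
    unfolding quotient_cyclic_def
  proof
    show "generates_quotient Z (fund_weight Z \<xi>1 - fund_weight Z (dim_row A1))" by (rule gen[OF ub vb adj0])
    show "fund_weight Z \<xi>1 - fund_weight Z (dim_row A1) \<in> weight_lattice Z"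
      unfolding fund_weight_def weight_lattice_def by simp
  qed
  then show ?thesis using gen unfolding Z_def by blast
qed

end
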